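(* Let $k$ be a field, $J,K$ proper monomial ideals in $Q=k[x,y,z]$, and $I=JK$. Then $[I:x]\cdot[I:(y,z)]\subseteq I$.
   Context: For ideals $I,L$ of $Q$, $I:L=\{f\in Q: fL\subseteq I\}$ and $I:f=I:(f)$. *)

theory Defs
  imports "HOL-Library.Poly_Mapping" "HOL-Library.Product_Plus"
begin

text \<open>The polynomial ring Q = k[x,y,z]: finitely supported functions from exponent
  vectors (a,b,c) (standing for x^a y^b z^c) to coefficients, with convolution product.\<close>
type_synonym 'a poly3 = "(nat \<times> nat \<times> nat) \<Rightarrow>\<^sub>0 'a"

definition varX :: "'a::comm_ring_1 poly3" where "varX = Poly_Mapping.single (1,0,0) 1"
definition varY :: "'a::comm_ring_1 poly3" where "varY = Poly_Mapping.single (0,1,0) 1"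
definition varZ :: "'a::comm_ring_1 poly3" where "varZ = Poly_Mapping.single (0,0,1) 1"

definition is_ideal :: "'r::comm_ring_1 set \<Rightarrow> bool" where
  "is_ideal I \<longleftrightarrow> 0 \<in> I \<and> (\<forall>a\<in>I. \<forall>b\<in>I. a + b \<in> I) \<and> (\<forall>r. \<forall>a\<in>I. r * a \<in> I)"

definition ideal_gen :: "'r::comm_ring_1 set \<Rightarrow> 'r set" where
  "ideal_gen S = \<Inter>{I. is_ideal I \<and> S \<subseteq> I}"

definition ideal_prod :: "'r::comm_ring_1 set \<Rightarrow> 'r set \<Rightarrow> 'r set" where
  "ideal_prod A B = ideal_gen {a * b | a b. a \<in> A \<and> b \<in> B}"

definition ideal_colon :: "'r::comm_ring_1 set \<Rightarrow> 'r set \<Rightarrow> 'r set" where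
  "ideal_colon I L = {f. \<forall>g\<in>L. f * g \<in> I}"

definition monomials3 :: "'a::comm_ring_1 poly3 set" where
  "monomials3 = {Poly_Mapping.single \<alpha> 1 | \<alpha>. True}"

definition monomial_ideal :: "'a::comm_ring_1 poly3 set \<Rightarrow> bool" where
  "monomial_ideal I \<longleftrightarrow> (\<exists>M \<subseteq> monomials3. I = ideal_gen M)"

end

theory Submission
  imports Defs
begin

definition upc :: "(nat\<times>nat\<times>nat) set \<Rightarrow> bool" where
  "upc S \<longleftrightarrow> (\<forall>a\<in>S. \<forall>d. a + d \<in> S)"

definition PS :: "(nat\<times>nat\<times>nat) set \<Rightarrow> 'a::comm_ring_1 poly3 set" where
  "PS S = {f. Poly_Mapping.keys f \<subseteq> S}"

lemma ideal_PS: assumes "upc S" shows "is_ideal (PS S :: 'a::comm_ring_1 poly3 set)"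
  unfolding is_ideal_def PS_def
proof (intro conjI ballI allI; simp)
  fix a b :: "'a poly3" assume "Poly_Mapping.keys a \<subseteq> S" "Poly_Mapping.keys b \<subseteq> S"
  then show "Poly_Mapping.keys (a+b) \<subseteq> S" using keys_add[of a b] by blast
next
  fix r a :: "'a poly3" assume a: "Poly_Mapping.keys a \<subseteq> S"
  show "Poly_Mapping.keys (r*a) \<subseteq> S"
  proof
    fix x assume "x \<in> Poly_Mapping.keys (r*a)"
    then obtain p q where "x = p + q" "q \<in> Poly_Mapping.keys a" using keys_mult[of r a] by blast
    then show "x \<in> S" using a assms unfolding upc_def by (metis add.commute subsetD)
  qed
qed

lemma ideal_sum: assumes "is_ideal I" shows "(\<forall>x\<in>A. f x \<in> I) \<Longrightarrow> sum f A \<in> I"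
proof (induction A rule: infinite_finite_induct)
  case (infinite A) then show ?case using assms by (simp add: is_ideal_def)
next
  case empty then show ?case using assms by (simp add: is_ideal_def)
next
  case (insert x F) then show ?case using assms by (simp add: is_ideal_def)
qed

lemma expansion:
  fixes f :: "'a::comm_ring_1 poly3"
  shows "f = (\<Sum>a\<in>Poly_Mapping.keys f. Poly_Mapping.single a (Poly_Mapping.lookup f a))"
proof (rule poly_mapping_eqI)
  fix k
  show "Poly_Mapping.lookup f k = Poly_Mapping.lookup (\<Sum>a\<in>Poly_Mapping.keys f. Poly_Mapping.single a (Poly_Mapping.lookup f a)) k"
    unfolding lookup_sum lookup_single
    by (cases "k \<in> Poly_Mapping.keys f") (auto simp: when_def in_keys_iff)
qed

lemma lookup_mult_single:
  fixes f :: "'a::comm_ring_1 poly3"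
  shows "Poly_Mapping.lookup (f * Poly_Mapping.single e 1) (b + e) = Poly_Mapping.lookup f b"
proof -
  have "f * Poly_Mapping.single e 1 = (\<Sum>a\<in>Poly_Mapping.keys f. Poly_Mapping.single a (Poly_Mapping.lookup f a)) * Poly_Mapping.single e 1"
    by (subst expansion[of f]) simp
  also have "\<dots> = (\<Sum>a\<in>Poly_Mapping.keys f. Poly_Mapping.single (a + e) (Poly_Mapping.lookup f a))"
    by (simp add: sum_distrib_right mult_single)
  finally have "Poly_Mapping.lookup (f * Poly_Mapping.single e 1) (b + e) = (\<Sum>a\<in>Poly_Mapping.keys f. (Poly_Mapping.lookup f a when a = b))"
    by (simp add: lookup_sum lookup_single)
  also have "\<dots> = Poly_Mapping.lookup f b"
    by (cases "b \<in> Poly_Mapping.keys f") (auto simp: when_def in_keys_iff)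
  finally show ?thesis .
qed

lemma PS_sub_ideal:
  fixes I :: "'a::comm_ring_1 poly3 set"
  assumes "is_ideal I" "\<And>a. a \<in> S \<Longrightarrow> Poly_Mapping.single a 1 \<in> I"
  shows "PS S \<subseteq> I"
proof
  fix f :: "'a poly3" assume "f \<in> PS S"
  then have k: "Poly_Mapping.keys f \<subseteq> S" by (simp add: PS_def)
  have "(\<Sum>a\<in>Poly_Mapping.keys f. Poly_Mapping.single a (Poly_Mapping.lookup f a)) \<in> I"
  proof (rule ideal_sum[OF assms(1)], intro ballI)
    fix a assume "a \<in> Poly_Mapping.keys f"
    then have "Poly_Mapping.single a 1 \<in> I" using k assms(2) by blast
    then have "Poly_Mapping.single 0 (Poly_Mapping.lookup f a) * Poly_Mapping.single a 1 \<in> I"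
      using assms(1) by (simp add: is_ideal_def)
    then show "Poly_Mapping.single a (Poly_Mapping.lookup f a) \<in> I" by (simp add: mult_single)
  qed
  then show "f \<in> I" using expansion[of f] by simp
qed

lemma ideal_gen_ideal: "is_ideal (ideal_gen S)"
  unfolding ideal_gen_def is_ideal_def by auto

lemma ideal_gen_sup: "S \<subseteq> ideal_gen S"
  unfolding ideal_gen_def by auto

lemma ideal_gen_least: "is_ideal I \<Longrightarrow> S \<subseteq> I \<Longrightarrow> ideal_gen S \<subseteq> I"
  unfolding ideal_gen_def by auto

lemma monomial_PS:
  fixes J :: "'a::comm_ring_1 poly3 set"
  assumes "monomial_ideal J"
  shows "\<exists>S. upc S \<and> J = PS S"
proof -
  obtain M where M: "M \<subseteq> monomials3" "J = ideal_gen M"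
    using assms unfolding monomial_ideal_def by blast
  define S where "S = {e + d | e d. Poly_Mapping.single e (1::'a) \<in> M}"
  have up: "upc S" unfolding upc_def
  proof (intro ballI allI)
    fix a d assume "a \<in> S"
    then obtain e d' where "a = e + d'" "Poly_Mapping.single e (1::'a) \<in> M" unfolding S_def by blast
    then show "a + d \<in> S" unfolding S_def by (metis (mono_tags, lifting) add.assoc mem_Collect_eq)
  qed
  have "J \<subseteq> PS S"
    unfolding M(2)
  proof (rule ideal_gen_least[OF ideal_PS[OF up]])
    show "M \<subseteq> PS S"
    proof
      fix m assume "m \<in> M"
      then obtain a where a: "m = Poly_Mapping.single a 1" using M(1) unfolding monomials3_def by blast
      have "a = a + 0" by simp
      then have "a \<in> S" using \<open>m \<in> M\<close> a unfolding S_def by blast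
      then show "m \<in> PS S" using a by (simp add: PS_def)
    qed
  qed
  moreover have "PS S \<subseteq> J"
    unfolding M(2)
  proof (rule PS_sub_ideal[OF ideal_gen_ideal])
    fix a assume "a \<in> S"
    then obtain e d where ed: "a = e + d" "Poly_Mapping.single e (1::'a) \<in> M" unfolding S_def by blast
    then have "Poly_Mapping.single d 1 * Poly_Mapping.single e (1::'a) \<in> ideal_gen M"
      using ideal_gen_ideal[of M] ideal_gen_sup[of M] unfolding is_ideal_def by blast
    then show "Poly_Mapping.single a 1 \<in> ideal_gen M" using ed by (simp add: mult_single add.commute)
  qed
  ultimately show ?thesis using up by blast
qed

definition msum :: "(nat\<times>nat\<times>nat) set \<Rightarrow> (nat\<times>nat\<times>nat) set \<Rightarrow> (nat\<times>nat\<times>nat) set" where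
  "msum A B = {a + b | a b. a \<in> A \<and> b \<in> B}"

lemma upc_msum: "upc A \<Longrightarrow> upc (msum A B)"
  unfolding upc_def msum_def
proof (intro ballI allI)
  fix c d assume u: "\<forall>a\<in>A. \<forall>d. a + d \<in> A" and "c \<in> {a + b |a b. a \<in> A \<and> b \<in> B}"
  then obtain a b where "c = a + b" "a \<in> A" "b \<in> B" by blast
  moreover have "a + d \<in> A" using u \<open>a \<in> A\<close> by blast
  moreover have "c + d = (a + d) + b" using \<open>c = a + b\<close> by (simp add: add_ac)
  ultimately show "c + d \<in> {a + b |a b. a \<in> A \<and> b \<in> B}" by blast
qed

lemma prod_PS:
  assumes "upc A" "upc B"
  shows "ideal_prod (PS A) (PS B) = (PS (msum A B) :: 'a::comm_ring_1 poly3 set)"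
proof
  show "ideal_prod (PS A) (PS B) \<subseteq> (PS (msum A B) :: 'a poly3 set)"
    unfolding ideal_prod_def
  proof (rule ideal_gen_least[OF ideal_PS[OF upc_msum[OF assms(1)]]], rule subsetI)
    fix x assume "x \<in> {a * b |a b. a \<in> (PS A :: 'a poly3 set) \<and> b \<in> PS B}"
    then obtain a b :: "'a poly3" where x: "x = a * b" and ab: "Poly_Mapping.keys a \<subseteq> A" "Poly_Mapping.keys b \<subseteq> B"
      unfolding PS_def by blast
    have "Poly_Mapping.keys x \<subseteq> msum A B"
    proof
      fix c assume "c \<in> Poly_Mapping.keys x"
      then obtain p q where "c = p + q" "p \<in> Poly_Mapping.keys a" "q \<in> Poly_Mapping.keys b"
        using keys_mult[of a b] x by blast
      then show "c \<in> msum A B" using ab unfolding msum_def by blast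
    qed
    then show "x \<in> PS (msum A B)" unfolding PS_def by simp
  qed
next
  show "PS (msum A B) \<subseteq> (ideal_prod (PS A) (PS B) :: 'a poly3 set)"
    unfolding ideal_prod_def
  proof (rule PS_sub_ideal[OF ideal_gen_ideal])
    fix c assume "c \<in> msum A B"
    then obtain a b where ab: "c = a + b" "a \<in> A" "b \<in> B" unfolding msum_def by blast
    have "Poly_Mapping.single a (1::'a) \<in> PS A" "Poly_Mapping.single b (1::'a) \<in> PS B"
      using ab by (auto simp: PS_def)
    then have "Poly_Mapping.single a (1::'a) * Poly_Mapping.single b 1 \<in> {a * b |a b. a \<in> PS A \<and> b \<in> PS B}"
      by blast
    then have "Poly_Mapping.single a (1::'a) * Poly_Mapping.single b 1 \<in> ideal_gen {a * b |a b. a \<in> PS A \<and> b \<in> PS B}"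
      using ideal_gen_sup by (rule subsetD[rotated])
    then show "Poly_Mapping.single c 1 \<in> ideal_gen {a * b |a b. a \<in> PS A \<and> (b::'a poly3) \<in> PS B}"
      using ab by (simp add: mult_single)
  qed
qed

lemma proper_zero:
  assumes "upc S" "(PS S :: 'a::comm_ring_1 poly3 set) \<noteq> UNIV"
  shows "0 \<notin> S"
proof
  assume "0 \<in> S"
  then have "\<forall>d. d \<in> S" using assms(1) unfolding upc_def by force
  then have "PS S = (UNIV :: 'a poly3 set)" unfolding PS_def by auto
  then show False using assms(2) by simp
qed


lemma dom_msum:
  assumes "upc A" "(j1,j2,j3) \<in> A" "(k1,k2,k3) \<in> B"
    "j1 + k1 \<le> a1" "j2 + k2 \<le> a2" "j3 + k3 \<le> a3"
  shows "(a1,a2,a3) \<in> msum A B"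
proof -
  have "(j1,j2,j3) + (a1-j1-k1, a2-j2-k2, a3-j3-k3) \<in> A" using assms(1,2) unfolding upc_def by blast
  moreover have "(a1,a2,a3) = ((j1,j2,j3) + (a1-j1-k1, a2-j2-k2, a3-j3-k3)) + (k1,k2,k3)"
    using assms(4-6) by simp
  ultimately show ?thesis using assms(3) unfolding msum_def by blast
qed

lemma msum_elim:
  assumes "(a1,a2,a3) \<in> msum A B"
  obtains j1 j2 j3 k1 k2 k3 where "(j1,j2,j3) \<in> A" "(k1,k2,k3) \<in> B"
    "a1 = j1 + k1" "a2 = j2 + k2" "a3 = j3 + k3"
  using assms unfolding msum_def by auto

lemma comb:
  assumes A: "upc A" and B: "upc B" and A0: "0 \<notin> A" and B0: "0 \<notin> B"
    and hu: "(u1,u2,u3) + (1,0,0) \<in> msum A B"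
    and hv2: "(v1,v2,v3) + (0,1,0) \<in> msum A B"
    and hv3: "(v1,v2,v3) + (0,0,1) \<in> msum A B"
  shows "(u1,u2,u3) + (v1,v2,v3) \<in> msum A B"
proof -
  from hu obtain j1 j2 j3 k1 k2 k3 where j: "(j1,j2,j3) \<in> A" and k: "(k1,k2,k3) \<in> B"
    and e: "u1 + 1 = j1 + k1" "u2 = j2 + k2" "u3 = j3 + k3"
    by (auto elim!: msum_elim)
  from hv2 obtain p1 p2 p3 q1 q2 q3 where p: "(p1,p2,p3) \<in> A" and q: "(q1,q2,q3) \<in> B"
    and f: "v1 = p1 + q1" "v2 + 1 = p2 + q2" "v3 = p3 + q3"
    by (auto elim!: msum_elim)
  from hv3 obtain r1 r2 r3 s1 s2 s3 where r: "(r1,r2,r3) \<in> A" and s: "(s1,s2,s3) \<in> B"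
    and g: "v1 = r1 + s1" "v2 = r2 + s2" "v3 + 1 = r3 + s3"
    by (auto elim!: msum_elim)
  show ?thesis
  proof (cases "v1 \<ge> 1 \<or> u2 \<ge> 1 \<or> u3 \<ge> 1")
    case True
    then show ?thesis
    proof (elim disjE)
      assume "v1 \<ge> 1" then show ?thesis using dom_msum[OF A j k] e by simp
    next
      assume "u2 \<ge> 1" then show ?thesis using dom_msum[OF A p q] f by simp
    next
      assume "u3 \<ge> 1" then show ?thesis using dom_msum[OF A r s] g by simp
    qed
  next
    case False
    then have z: "v1 = 0" "u2 = 0" "u3 = 0" by auto
    have "j1 \<ge> 1" using j A0 e z by (cases j1) (auto simp: zero_prod_def)
    have "k1 \<ge> 1" using k B0 e z by (cases k1) (auto simp: zero_prod_def)
    show ?thesis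
    proof (cases "q2 \<ge> 1")
      case True
      then show ?thesis using dom_msum[OF A p k] e f z \<open>j1 \<ge> 1\<close> by simp
    next
      case False
      then show ?thesis using dom_msum[OF A j q] e f z \<open>k1 \<ge> 1\<close> by simp
    qed
  qed
qed

theorem mainTheorem6:
  fixes J K I :: "'k::field poly3 set"
  assumes "monomial_ideal J" and "monomial_ideal K"
    and "J \<noteq> UNIV" and "K \<noteq> UNIV"
    and "I = ideal_prod J K"
  shows "ideal_prod (ideal_colon I (ideal_gen {varX}))
                    (ideal_colon I (ideal_gen {varY, varZ})) \<subseteq> I"
proof -
  obtain A where A: "upc A" "J = PS A" using monomial_PS[OF assms(1)] by blast
  obtain B where B: "upc B" "K = PS B" using monomial_PS[OF assms(2)] by blast
  have A0: "0 \<notin> A" using proper_zero[OF A(1)] A(2) assms(3) by blast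
  have B0: "0 \<notin> B" using proper_zero[OF B(1)] B(2) assms(4) by blast
  have "I = ideal_prod (PS A) (PS B)" by (simp add: assms(5) A(2) B(2))
  then have I: "I = PS (msum A B)" using prod_PS[OF A(1) B(1)] by simp
  show ?thesis unfolding ideal_prod_def
  proof (rule ideal_gen_least)
    show "is_ideal I" unfolding I by (rule ideal_PS[OF upc_msum[OF A(1)]])
  next
    show "{a * b |a b. a \<in> ideal_colon I (ideal_gen {varX}) \<and> b \<in> ideal_colon I (ideal_gen {varY, varZ})} \<subseteq> I"
  proof (safe)
    fix x and a b :: "'k poly3"
    assume a: "a \<in> ideal_colon I (ideal_gen {varX})"
      and b: "b \<in> ideal_colon I (ideal_gen {varY, varZ})"
    have "a * varX \<in> I" using a ideal_gen_sup[of "{varX}"] unfolding ideal_colon_def by blast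
    then have ka: "\<And>p. p \<in> Poly_Mapping.keys a \<Longrightarrow> p + (1,0,0) \<in> msum A B"
    proof -
      fix p assume "p \<in> Poly_Mapping.keys a"
      then have "Poly_Mapping.lookup (a * varX) (p + (1,0,0)) \<noteq> 0"
        unfolding varX_def lookup_mult_single by (simp add: in_keys_iff)
      then have "p + (1,0,0) \<in> Poly_Mapping.keys (a * varX)" by (simp add: in_keys_iff)
      then show "p + (1,0,0) \<in> msum A B" using \<open>a * varX \<in> I\<close> unfolding I PS_def by blast
    qed
    have "b * varY \<in> I" using b ideal_gen_sup[of "{varY, varZ}"] unfolding ideal_colon_def by blast
    then have kb2: "\<And>p. p \<in> Poly_Mapping.keys b \<Longrightarrow> p + (0,1,0) \<in> msum A B"
    proof -
      fix p assume "p \<in> Poly_Mapping.keys b"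
      then have "Poly_Mapping.lookup (b * varY) (p + (0,1,0)) \<noteq> 0"
        unfolding varY_def lookup_mult_single by (simp add: in_keys_iff)
      then have "p + (0,1,0) \<in> Poly_Mapping.keys (b * varY)" by (simp add: in_keys_iff)
      then show "p + (0,1,0) \<in> msum A B" using \<open>b * varY \<in> I\<close> unfolding I PS_def by blast
    qed
    have "b * varZ \<in> I" using b ideal_gen_sup[of "{varY, varZ}"] unfolding ideal_colon_def by blast
    then have kb3: "\<And>p. p \<in> Poly_Mapping.keys b \<Longrightarrow> p + (0,0,1) \<in> msum A B"
    proof -
      fix p assume "p \<in> Poly_Mapping.keys b"
      then have "Poly_Mapping.lookup (b * varZ) (p + (0,0,1)) \<noteq> 0"
        unfolding varZ_def lookup_mult_single by (simp add: in_keys_iff)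
      then have "p + (0,0,1) \<in> Poly_Mapping.keys (b * varZ)" by (simp add: in_keys_iff)
      then show "p + (0,0,1) \<in> msum A B" using \<open>b * varZ \<in> I\<close> unfolding I PS_def by blast
    qed
    show "a * b \<in> I" unfolding I PS_def
    proof (safe)
      fix c assume "c \<in> Poly_Mapping.keys (a * b)"
      then obtain p q where c: "c = p + q" "p \<in> Poly_Mapping.keys a" "q \<in> Poly_Mapping.keys b"
        using keys_mult[of a b] by blast
      obtain u1 u2 u3 where u: "p = (u1,u2,u3)" by (cases p) auto
      obtain v1 v2 v3 where v: "q = (v1,v2,v3)" by (cases q) auto
      show "c \<in> msum A B"
        using comb[OF A(1) B(1) A0 B0, of u1 u2 u3 v1 v2 v3] ka[OF c(2)] kb2[OF c(3)] kb3[OF c(3)] c(1) u v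
        by simp
    qed
  qed
  qed
qed

end
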